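(* Let $(P_n)_{n\ge 0}$ be the Catalan-Larcombe-French numbers. Then for every prime $p$ and all positive integers $m$ and $r$, $$P_{mp^r}\equiv P_{mp^{r-1}}\pmod{p^r}.$$
   Context: The Catalan-Larcombe-French numbers are defined by $P_0=1$, $P_1=8$ and, for $n\ge 2$, $n^2P_n-8(3n^2-3n+1)P_{n-1}+128(n-1)^2P_{n-2}=0$. Equivalently, $P_n=2^n\sum_{i=0}^{\lfloor n/2\rfloor}(-4)^i\binom{2(n-i)}{n-i}^2\binom{n-i}{i}$ for $n\ge 0$. The first values are $1,8,80,896,10816,137728$. *)

theory Defs
  imports "HOL-Computational_Algebra.Primes" "HOL-Number_Theory.Cong"
begin

definition clf :: "nat \<Rightarrow> int" where
  "clf n = 2 ^ n * (\<Sum>i\<le>n div 2. (-4) ^ i * int ((2 * (n - i)) choose (n - i)) ^ 2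
                                       * int ((n - i) choose i))"

end

theory Submission
  imports Defs "HOL-Computational_Algebra.Polynomial"
begin


definition mc :: "int \<Rightarrow> 'a::comm_ring_1 \<Rightarrow> 'a \<Rightarrow> bool" where
  "mc q A B \<longleftrightarrow> (\<exists>C. A - B = of_int q * C)"

lemma mc_refl: "mc q A A"
  unfolding mc_def by (intro exI[of _ 0]) simp

lemma mc_sym: "mc q A B \<Longrightarrow> mc q B A"
  unfolding mc_def by (metis minus_diff_eq mult_minus_right)

lemma mc_trans: "mc q A B \<Longrightarrow> mc q B D \<Longrightarrow> mc q A D"
  unfolding mc_def
proof (elim exE)
  fix C E assume "A - B = of_int q * C" "B - D = of_int q * E"
  then have "A - D = of_int q * (C + E)" by (simp add: algebra_simps)
  then show "\<exists>C. A - D = of_int q * C" by blast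
qed

lemma mc_add: "mc q A B \<Longrightarrow> mc q A' B' \<Longrightarrow> mc q (A + A') (B + B')"
  unfolding mc_def
proof (elim exE)
  fix C E assume "A - B = of_int q * C" "A' - B' = of_int q * E"
  then have "(A + A') - (B + B') = of_int q * (C + E)" by (simp add: algebra_simps)
  then show "\<exists>C. (A + A') - (B + B') = of_int q * C" by blast
qed

lemma mc_mult: "mc q A B \<Longrightarrow> mc q A' B' \<Longrightarrow> mc q (A * A') (B * B')"
  unfolding mc_def
proof (elim exE)
  fix C E assume h: "A - B = of_int q * C" "A' - B' = of_int q * E"
  have "A * A' - B * B' = A * (A' - B') + (A - B) * B'" by (simp add: algebra_simps)
  also have "\<dots> = of_int q * (A * E + C * B')" using h by (simp add: algebra_simps)
  finally show "\<exists>C. A * A' - B * B' = of_int q * C" by blast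
qed

lemma mc_power: "mc q A B \<Longrightarrow> mc q (A ^ n) (B ^ n)"
  by (induction n) (auto intro: mc_mult mc_refl)

lemma mc_cmult: "mc q A B \<Longrightarrow> mc q (D * A) (D * B)"
  by (rule mc_mult[OF mc_refl])

lemma mc_dvd: "mc q A B \<Longrightarrow> q' dvd q \<Longrightarrow> mc q' A B"
  unfolding mc_def dvd_def
proof (elim exE)
  fix C k assume "A - B = of_int q * C" "q = q' * k"
  then have "A - B = of_int q' * (of_int k * C)" by simp
  then show "\<exists>C. A - B = of_int q' * C" by blast
qed

lemma choose_prime_ex:
  assumes "prime p" "0 < k" "k < p"
  shows "\<exists>d. p choose k = p * d"
  using dvd_choose_prime[of k p] assms by (auto simp: dvd_def)

lemma freshman:
  fixes a b :: "'a::comm_ring_1"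
  assumes p: "prime (p::nat)"
  shows "mc (int p) ((a + b) ^ p) (a ^ p + b ^ p)"
proof -
  have p0: "p > 0" using p prime_gt_0_nat by blast
  define d where "d k = (p choose k) div p" for k
  have dk: "p choose k = p * d k" if "0 < k" "k < p" for k
    using choose_prime_ex[OF p that] d_def by auto
  have "(a + b) ^ p = (\<Sum>k\<le>p. of_nat (p choose k) * a ^ k * b ^ (p - k))"
    by (rule binomial_ring)
  also have "\<dots> = (\<Sum>k\<in>{0,p}. of_nat (p choose k) * a ^ k * b ^ (p - k))
      + (\<Sum>k\<in>{1..<p}. of_nat (p choose k) * a ^ k * b ^ (p - k))"
  proof -
    have e: "{..p} = {0,p} \<union> {1..<p}" using p0 by auto
    show ?thesis unfolding e by (rule sum.union_disjoint) auto
  qed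
  also have "(\<Sum>k\<in>{1..<p}. of_nat (p choose k) * a ^ k * b ^ (p - k))
      = of_int (int p) * (\<Sum>k\<in>{1..<p}. of_nat (d k) * a ^ k * b ^ (p - k))"
    by (simp add: sum_distrib_left dk mult.assoc)
  finally show ?thesis unfolding mc_def using p0 by (auto simp: add.commute)
qed

lemma mc_of_nat_power:
  assumes p: "prime (p::nat)"
  shows "mc (int p) ((of_nat c :: 'a::comm_ring_1) ^ p) (of_nat c)"
proof (induction c)
  case 0 then show ?case using p prime_gt_0_nat by (simp add: mc_refl power_0_left)
next
  case (Suc c)
  have "mc (int p) ((of_nat c + 1 :: 'a) ^ p) ((of_nat c) ^ p + 1 ^ p)" by (rule freshman[OF p])
  then have "mc (int p) ((of_nat c + 1 :: 'a) ^ p) ((of_nat c) ^ p + 1)" by simp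
  moreover have "mc (int p) ((of_nat c :: 'a) ^ p + 1) (of_nat c + 1)"
    by (rule mc_add[OF Suc mc_refl])
  ultimately show ?case by (auto intro: mc_trans simp: add.commute)
qed

lemma mc_scaled_power:
  assumes p: "prime (p::nat)"
  shows "mc (int p) ((of_nat c * x :: 'a::comm_ring_1) ^ p) (of_nat c * x ^ p)"
  unfolding power_mult_distrib by (rule mc_mult[OF mc_of_nat_power[OF p] mc_refl])

lemma mc_lift:
  fixes A B :: "'a::comm_ring_1"
  assumes p: "prime (p::nat)" and k: "k \<ge> 1" and h: "mc (int p ^ k) A B"
  shows "mc (int p ^ (k+1)) (A ^ p) (B ^ p)"
proof -
  have p0: "p > 1" using p prime_gt_1_nat by blast
  obtain C where C: "A - B = of_int (int p ^ k) * C" using h unfolding mc_def by blast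
  define D where "D = of_int (int p ^ k) * C"
  have A: "A = D + B" using C D_def by (simp add: algebra_simps)
  define d where "d i = (p choose i) div p" for i
  have dk: "p choose i = p * d i" if "0 < i" "i < p" for i
    using choose_prime_ex[OF p that] d_def by auto
  have "A ^ p = (\<Sum>i\<le>p. of_nat (p choose i) * D ^ i * B ^ (p - i))"
    unfolding A by (rule binomial_ring)
  also have "\<dots> = (\<Sum>i\<in>{0,p}. of_nat (p choose i) * D ^ i * B ^ (p - i))
      + (\<Sum>i\<in>{1..<p}. of_nat (p choose i) * D ^ i * B ^ (p - i))"
  proof -
    have e: "{..p} = {0,p} \<union> {1..<p}" using p0 by auto
    show ?thesis unfolding e by (rule sum.union_disjoint) auto
  qed
  also have "(\<Sum>i\<in>{0,p}. of_nat (p choose i) * D ^ i * B ^ (p - i)) = B ^ p + D ^ p"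
    using p0 by simp
  also have "D ^ p = of_int (int p ^ (k+1)) * (of_int (int p ^ (k * p - (k+1))) * C ^ p)"
  proof -
    have "k * p \<ge> k * 2" using p0 by simp
    then have "k * p \<ge> k + 1" using k by linarith
    then have "(of_nat p :: 'a) ^ (k * p) = of_nat p ^ (k+1) * of_nat p ^ (k * p - (k+1))"
      by (metis le_add_diff_inverse power_add)
    then show ?thesis unfolding D_def by (simp add: power_mult_distrib power_mult[symmetric] ac_simps)
  qed
  also have "(\<Sum>i\<in>{1..<p}. of_nat (p choose i) * D ^ i * B ^ (p - i))
      = of_int (int p ^ (k+1)) * (\<Sum>i\<in>{1..<p}. of_nat (d i) * (of_int (int p ^ (k * i - k)) * C ^ i) * B ^ (p - i))"
  proof -
    have "of_nat (p choose i) * D ^ i * B ^ (p - i)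
        = of_int (int p ^ (k+1)) * (of_nat (d i) * (of_int (int p ^ (k * i - k)) * C ^ i) * B ^ (p - i))"
      if "i \<in> {1..<p}" for i
    proof -
      have i: "i \<ge> 1" using that by auto
      have ki: "k * i \<ge> k" using i by simp
      have "int p ^ (k * i) = int p ^ k * int p ^ (k * i - k)"
        using ki by (metis le_add_diff_inverse power_add)
      then have "(of_int (int p ^ k) :: 'a) ^ i = of_int (int p ^ k) * of_int (int p ^ (k * i - k))"
        by (metis of_int_mult of_int_power power_mult)
      then show ?thesis unfolding D_def using dk[of i] that
        by (simp add: power_mult_distrib algebra_simps)
    qed
    then show ?thesis by (simp add: sum_distrib_left)
  qed
  finally show ?thesis unfolding mc_def
    by (intro exI[of _ "(of_int (int p ^ (k * p - (k+1))) * C ^ p) + (\<Sum>i\<in>{1..<p}. of_nat (d i) * (of_int (int p ^ (k * i - k)) * C ^ i) * B ^ (p - i))"])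
      (simp add: algebra_simps)
qed

lemma mc_iter:
  fixes A B :: "'a::comm_ring_1"
  assumes p: "prime (p::nat)" and h: "mc (int p) (A ^ p) B" and r: "r \<ge> 1"
  shows "mc (int p ^ r) (A ^ (p ^ r)) (B ^ (p ^ (r - 1)))"
  using r
proof (induction r rule: dec_induct)
  case base then show ?case using h by simp
next
  case (step r)
  have "mc (int p ^ (r+1)) ((A ^ (p ^ r)) ^ p) ((B ^ (p ^ (r - 1))) ^ p)"
    by (rule mc_lift[OF p step.hyps(1) step.IH])
  moreover have "p ^ (Suc r - 1) = p ^ (r - 1) * p" using step.hyps(1)
    by (metis Suc_diff_le diff_Suc_1 power_Suc2)
  ultimately show ?case by (simp add: power_mult[symmetric] mult.commute)
qed




definition mon :: "nat \<Rightarrow> nat \<Rightarrow> int poly poly" where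
  "mon i j = monom (monom 1 j) i"

definition cf :: "nat \<Rightarrow> nat \<Rightarrow> int poly poly \<Rightarrow> int" where
  "cf i j P = coeff (coeff P i) j"

lemma mon_mult: "mon i j * mon k l = mon (i + k) (j + l)"
  unfolding mon_def by (simp add: mult_monom)

lemma mon_power: "mon i j ^ n = mon (i * n) (j * n)"
  unfolding mon_def by (simp add: monom_power)

lemma mon_00: "mon 0 0 = 1"
  unfolding mon_def by simp

lemma cf_mon: "cf x y (mon i j) = (if i = x \<and> j = y then 1 else 0)"
  unfolding cf_def mon_def by auto

lemma cf_sum: "cf x y (\<Sum>k\<in>A. f k) = (\<Sum>k\<in>A. cf x y (f k))"
  unfolding cf_def by (simp add: coeff_sum)

lemma coeff_of_int_mult: "coeff (of_int c * P) n = of_int c * coeff P n"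
  by (simp add: of_int_poly)

lemma cf_of_int_mult: "cf x y (of_int c * P) = c * cf x y P"
  unfolding cf_def by (simp add: coeff_of_int_mult)

lemma cf_of_nat_mult: "cf x y (of_nat c * P) = int c * cf x y P"
  using cf_of_int_mult[of x y "int c" P] by simp

definition Lam :: "nat \<Rightarrow> int poly poly" where
  "Lam a = 2 * ((mon (2*a) 0 + 1) * (mon 0 (2*a) + 1) + 4 * mon a a)"

lemma Lam_expand: "Lam a = of_nat 2 * mon (2*a) (2*a) + (of_nat 2 * mon (2*a) 0 + (of_nat 2 * mon 0 (2*a)
   + (of_nat 2 * mon 0 0 + of_nat 8 * mon a a)))"
  unfolding Lam_def by (simp add: algebra_simps mon_mult mon_00)

lemma Lam_frob:
  assumes p: "prime (p::nat)"
  shows "mc (int p) (Lam 1 ^ p) (Lam p)"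
proof -
  have sc: "mc (int p) ((of_nat c * mon i j) ^ p) (of_nat c * mon (i*p) (j*p))" for c i j
    using mc_scaled_power[OF p, of c "mon i j"] by (simp add: mon_power)
  have add: "mc (int p) ((x + y) ^ p) (X + Y)"
    if "mc (int p) (x ^ p) X" "mc (int p) (y ^ p) Y" for x y X Y :: "int poly poly"
    by (rule mc_trans[OF freshman[OF p] mc_add[OF that]])
  have sc': "mc (int p) ((of_nat c * mon i j) ^ p) (of_nat c * mon i' j')"
    if "i' = i * p" "j' = j * p" for c i j i' j'
    using sc that by simp
  show ?thesis unfolding Lam_expand[of 1] Lam_expand[of p]
    by (intro add sc') simp_all
qed

lemma A_pow: "(mon i 0 + 1) ^ j = (\<Sum>k\<le>j. of_nat (j choose k) * mon (i*k) 0)"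
  using binomial_ring[of "mon i 0" 1 j] by (simp add: mon_power)

lemma B_pow: "(mon 0 i + 1) ^ j = (\<Sum>k\<le>j. of_nat (j choose k) * mon 0 (i*k))"
  using binomial_ring[of "mon 0 i" 1 j] by (simp add: mon_power)

lemma W_pow: "(4 * mon a a) ^ k = of_nat (4 ^ k) * mon (a*k) (a*k)"
  by (simp add: power_mult_distrib mon_power)

lemma Lam_pow: "Lam a ^ N = of_nat (2^N) * (\<Sum>j\<le>N. of_nat (N choose j) *
    ((\<Sum>k\<le>j. of_nat (j choose k) * mon (2*a*k) 0) * (\<Sum>l\<le>j. of_nat (j choose l) * mon 0 (2*a*l))
     * (of_nat (4 ^ (N - j)) * mon (a*(N-j)) (a*(N-j)))))"
proof -
  have "Lam a ^ N = 2 ^ N * ((mon (2*a) 0 + 1) * (mon 0 (2*a) + 1) + 4 * mon a a) ^ N"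
    unfolding Lam_def by (rule power_mult_distrib)
  also have "((mon (2*a) 0 + 1) * (mon 0 (2*a) + 1) + 4 * mon a a) ^ N =
     (\<Sum>j\<le>N. of_nat (N choose j) * ((mon (2*a) 0 + 1) * (mon 0 (2*a) + 1)) ^ j * (4 * mon a a) ^ (N - j))"
    by (rule binomial_ring)
  finally show ?thesis
    unfolding power_mult_distrib A_pow B_pow mon_power by (simp add: ac_simps)
qed

lemma inner_sum:
  assumes "j \<le> N" "a > 0"
  shows "(\<Sum>k\<le>j. int (j choose k) * (if 2*a*k + a*(N-j) = a*N then 1 else 0))
       = (if even j then int (j choose (j div 2)) else 0)"
proof -
  have "(\<Sum>k\<le>j. int (j choose k) * (if 2*a*k + a*(N-j) = a*N then 1 else 0))
      = (\<Sum>k\<le>j. if k = j div 2 \<and> even j then int (j choose k) else 0)"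
  proof (intro sum.cong refl)
    fix k assume "k \<in> {..j}"
    have "(2*a*k + a*(N-j) = a*N) \<longleftrightarrow> (a * (2*k + (N - j)) = a * N)" by (simp add: algebra_simps)
    also have "\<dots> \<longleftrightarrow> 2*k + (N-j) = N" using assms by simp
    also have "\<dots> \<longleftrightarrow> (k = j div 2 \<and> even j)" using assms(1) by presburger
    finally show "int (j choose k) * (if 2*a*k + a*(N-j) = a*N then 1 else 0)
        = (if k = j div 2 \<and> even j then int (j choose k) else 0)" by auto
  qed
  also have "\<dots> = (if even j then int (j choose (j div 2)) else 0)"
    by (cases "even j") (auto simp: sum.delta)
  finally show ?thesis .
qed

definition bB :: "nat \<Rightarrow> int" where
  "bB n = (\<Sum>m\<le>n div 2. int (n choose (2*m)) * 4 ^ (n - 2*m) * int ((2*m) choose m) ^ 2)"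

lemma cf_Lam_pow:
  assumes a: "a > 0"
  shows "cf (a*N) (a*N) (Lam a ^ N) = 2 ^ N * bB N"
proof -
  have step: "cf (a*N) (a*N) ((\<Sum>k\<le>j. of_nat (j choose k) * mon (2*a*k) 0) * (\<Sum>l\<le>j. of_nat (j choose l) * mon 0 (2*a*l))
     * (of_nat (4 ^ (N - j)) * mon (a*(N-j)) (a*(N-j))))
     = 4 ^ (N - j) * (if even j then int (j choose (j div 2)) ^ 2 else 0)" if j: "j \<le> N" for j
  proof -
    have ifand: "(if A \<and> B then 1 else 0 :: int) = (if A then 1 else 0) * (if B then 1 else 0)" for A B by simp
    define c where "c k l = 4 ^ (N - j) * int (j choose k) * int (j choose l)" for k l
    have "((\<Sum>k\<le>j. of_nat (j choose k) * mon (2*a*k) 0) * (\<Sum>l\<le>j. of_nat (j choose l) * mon 0 (2*a*l))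
     * (of_nat (4 ^ (N - j)) * mon (a*(N-j)) (a*(N-j))))
      = (\<Sum>k\<le>j. \<Sum>l\<le>j. of_int (c k l) * mon (2*a*k + a*(N-j)) (2*a*l + a*(N-j)))"
      by (simp add: c_def sum_distrib_left sum_distrib_right mon_mult algebra_simps)
    then have "cf (a*N) (a*N) ((\<Sum>k\<le>j. of_nat (j choose k) * mon (2*a*k) 0) * (\<Sum>l\<le>j. of_nat (j choose l) * mon 0 (2*a*l))
     * (of_nat (4 ^ (N - j)) * mon (a*(N-j)) (a*(N-j))))
      = (\<Sum>k\<le>j. \<Sum>l\<le>j. c k l *
           (if 2*a*k + a*(N-j) = a*N \<and> 2*a*l + a*(N-j) = a*N then 1 else 0))"
      by (simp add: cf_sum cf_of_int_mult cf_mon)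
    also have "\<dots> = 4 ^ (N - j) * ((\<Sum>k\<le>j. int (j choose k) * (if 2*a*k + a*(N-j) = a*N then 1 else 0))
         * (\<Sum>l\<le>j. int (j choose l) * (if 2*a*l + a*(N-j) = a*N then 1 else 0)))"
    proof -
      have "(\<Sum>k\<le>j. \<Sum>l\<le>j. c k l *
           (if 2*a*k + a*(N-j) = a*N \<and> 2*a*l + a*(N-j) = a*N then 1 else 0))
         = (\<Sum>k\<le>j. \<Sum>l\<le>j. 4 ^ (N - j) * ((int (j choose k) * (if 2*a*k + a*(N-j) = a*N then 1 else 0))
               * (int (j choose l) * (if 2*a*l + a*(N-j) = a*N then 1 else 0))))"
        by (intro sum.cong refl) (simp only: c_def ifand ac_simps)
      also have "\<dots> = 4 ^ (N - j) * ((\<Sum>k\<le>j. int (j choose k) * (if 2*a*k + a*(N-j) = a*N then 1 else 0))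
         * (\<Sum>l\<le>j. int (j choose l) * (if 2*a*l + a*(N-j) = a*N then 1 else 0)))"
        by (subst sum_product) (simp only: sum_distrib_left)
      finally show ?thesis .
    qed
    also have "\<dots> = 4 ^ (N - j) * (if even j then int (j choose (j div 2)) ^ 2 else 0)"
      using inner_sum[OF j a] by (simp add: power2_eq_square)
    finally show ?thesis .
  qed
  have "cf (a*N) (a*N) (Lam a ^ N) = 2 ^ N * (\<Sum>j\<le>N. int (N choose j) * (4 ^ (N - j) * (if even j then int (j choose (j div 2)) ^ 2 else 0)))"
  proof -
    have "cf (a*N) (a*N) (Lam a ^ N) = int (2^N) * (\<Sum>j\<le>N. int (N choose j) * cf (a*N) (a*N) ((\<Sum>k\<le>j. of_nat (j choose k) * mon (2*a*k) 0) * (\<Sum>l\<le>j. of_nat (j choose l) * mon 0 (2*a*l))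
     * (of_nat (4 ^ (N - j)) * mon (a*(N-j)) (a*(N-j)))))"
      unfolding Lam_pow cf_of_nat_mult cf_sum ..
    also have "\<dots> = int (2^N) * (\<Sum>j\<le>N. int (N choose j) * (4 ^ (N - j) * (if even j then int (j choose (j div 2)) ^ 2 else 0)))"
    proof (intro arg_cong[where f="\<lambda>x. int (2^N) * x"] sum.cong refl)
      fix j assume "j \<in> {..N}"
      then show "int (N choose j) * cf (a*N) (a*N) ((\<Sum>k\<le>j. of_nat (j choose k) * mon (2*a*k) 0) * (\<Sum>l\<le>j. of_nat (j choose l) * mon 0 (2*a*l))
     * (of_nat (4 ^ (N - j)) * mon (a*(N-j)) (a*(N-j)))) = int (N choose j) * (4 ^ (N - j) * (if even j then int (j choose (j div 2)) ^ 2 else 0))"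
        using step[of j] by simp
    qed
    finally show ?thesis by simp
  qed
  also have "(\<Sum>j\<le>N. int (N choose j) * (4 ^ (N - j) * (if even j then int (j choose (j div 2)) ^ 2 else 0)))
      = (\<Sum>j\<in>{j\<in>{..N}. even j}. int (N choose j) * 4 ^ (N - j) * int (j choose (j div 2)) ^ 2)"
    by (simp add: sum.inter_filter[symmetric] if_distrib if_distribR mult.assoc cong: if_cong)
  also have "{j\<in>{..N}. even j} = (\<lambda>m. 2*m) ` {..N div 2}"
    by (auto simp: image_iff elim!: evenE) 
  also have "(\<Sum>j\<in>(\<lambda>m. 2*m) ` {..N div 2}. int (N choose j) * 4 ^ (N - j) * int (j choose (j div 2)) ^ 2) = bB N"
    unfolding bB_def by (subst sum.reindex) (auto simp: inj_on_def)
  finally show ?thesis .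
qed

theorem bB_gauss:
  assumes p: "prime (p::nat)" and r: "r \<ge> 1"
  shows "[2 ^ (m * p ^ r) * bB (m * p ^ r) = 2 ^ (m * p ^ (r-1)) * bB (m * p ^ (r-1))] (mod (int p ^ r))"
proof -
  have p0: "p > 0" using p prime_gt_0_nat by blast
  have "mc (int p ^ r) (Lam 1 ^ (p ^ r)) (Lam p ^ (p ^ (r - 1)))"
    by (rule mc_iter[OF p Lam_frob[OF p] r])
  then have "mc (int p ^ r) ((Lam 1 ^ (p ^ r)) ^ m) ((Lam p ^ (p ^ (r - 1))) ^ m)"
    by (rule mc_power)
  then obtain C where C: "Lam 1 ^ (m * p ^ r) - Lam p ^ (m * p ^ (r-1)) = of_int (int p ^ r) * C"
    unfolding mc_def by (auto simp: power_mult[symmetric] mult.commute)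
  have e: "p * (m * p ^ (r-1)) = m * p ^ r" using r by (cases r) auto
  have h1: "cf (m * p ^ r) (m * p ^ r) (Lam 1 ^ (m * p ^ r)) = 2 ^ (m * p ^ r) * bB (m * p ^ r)"
    using cf_Lam_pow[of 1 "m * p ^ r"] by simp
  have h2: "cf (m * p ^ r) (m * p ^ r) (Lam p ^ (m * p ^ (r-1))) = 2 ^ (m * p ^ (r-1)) * bB (m * p ^ (r-1))"
    using cf_Lam_pow[OF p0, of "m * p ^ (r-1)"] unfolding e .
  have "cf (m * p ^ r) (m * p ^ r) (Lam 1 ^ (m * p ^ r) - Lam p ^ (m * p ^ (r-1)))
      = 2 ^ (m * p ^ r) * bB (m * p ^ r) - 2 ^ (m * p ^ (r-1)) * bB (m * p ^ (r-1))"
    using h1 h2 by (simp add: cf_def)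
  moreover have "cf (m * p ^ r) (m * p ^ r) (Lam 1 ^ (m * p ^ r) - Lam p ^ (m * p ^ (r-1))) = int p ^ r * cf (m * p ^ r) (m * p ^ r) C"
    unfolding C cf_of_int_mult by simp
  ultimately show ?thesis
    by (simp add: cong_iff_dvd_diff dvd_def)
qed




declare binomial_Suc_Suc[simp del]

lemma L1: "(n + 1 - k) * ((n+1) choose k) = (n + 1) * (n choose k)"
  using binomial_absorb_comp[of "n+1" k] by simp

lemma L2: "(k + 1) * ((n+1) choose (k+1)) = (n + 1) * (n choose k)"
  using Suc_times_binomial[of k n] by simp

lemma L4: "(k + 1) * ((2*k+2) choose (k+1)) = 2 * (2*k+1) * ((2*k) choose k)"
proof -
  have a: "(k + 1) * ((2*k+2) choose (k+1)) = (2*k+2) * ((2*k+1) choose k)"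
    using L2[of k "2*k+1"] by simp
  have b: "(k + 1) * ((2*k+1) choose k) = (2*k+1) * ((2*k) choose k)"
    using L1[of "2*k" k] by (simp add: Suc_diff_le)
  have "(k+1) * ((k + 1) * ((2*k+2) choose (k+1))) = (2*k+2) * ((k + 1) * ((2*k+1) choose k))"
    unfolding a by (simp only: ac_simps)
  also have "\<dots> = (k+1) * (2 * (2*k+1) * ((2*k) choose k))"
    unfolding b by (simp only: ac_simps) (simp add: algebra_simps)
  finally have h: "(k+1) * ((k + 1) * ((2*k+2) choose (k+1))) = (k+1) * (2 * (2*k+1) * ((2*k) choose k))" .
  show ?thesis using h by (subst (asm) mult_cancel_left) simp
qed

definition TO :: "nat \<Rightarrow> nat \<Rightarrow> int" where
  "TO n i = (-4) ^ i * int ((2*(n-i)) choose (n-i)) ^ 2 * int ((n-i) choose i)"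

definition P4 :: "real \<Rightarrow> real \<Rightarrow> real" where
  "P4 n i = i * (2*i - 3*n - 8*n*i - 4*n*i^2 + 8*n^2 + 10*n^2*i - 6*n^3)"

definition GO :: "nat \<Rightarrow> nat \<Rightarrow> real" where
  "GO n i = real_of_int (TO n i) * P4 (real n) (real i) / (2 * real (n - i) - 1) ^ 2"

lemma odd_ne: "2 * real (j::nat) - 1 \<noteq> 0"
proof
  assume "2 * real j - 1 = 0"
  then have "real (2 * j) = real 1" by simp
  then have "2 * j = 1" by (simp only: of_nat_eq_iff)
  then show False by presburger
qed

lemma termO_main:
  assumes ji: "i \<le> J"
  shows "real_of_int (int (J+i+2)^2 * TO (J+i+2) i - 4 * (3 * int (J+i+2)^2 - 3 * int (J+i+2) + 1) * TO (J+i+1) i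
     + 32 * int (J+i+1)^2 * TO (J+i) i) = GO (J+i+2) (i+1) - GO (J+i+2) i"
proof -
  define a where "a = real ((2*J) choose J)"
  define c1 where "c1 = real ((2*J+2) choose (J+1))"
  define c2 where "c2 = real ((2*J+4) choose (J+2))"
  define z where "z = real (J choose i)"
  define b1 where "b1 = real ((J+1) choose i)"
  define b2 where "b2 = real ((J+2) choose i)"
  define b3 where "b3 = real ((J+1) choose (i+1))"
  define s where "s = ((-4) ^ i :: real)"
  have ar: "J+i-i = J" "J+i+1-i = J+1" "J+i+2-i = J+2" "J+i+2-(i+1) = J+1" "2*(J+1) = 2*J+2" "2*(J+2) = 2*J+4"
    "J+1+1 = J+2" "2*J+2+2 = 2*J+4" by simp_all
  have t0: "real_of_int (TO (J+i) i) = s * a^2 * z"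
    unfolding TO_def s_def a_def z_def by (simp only: ar) simp
  have t1: "real_of_int (TO (J+i+1) i) = s * c1^2 * b1"
    unfolding TO_def s_def c1_def b1_def by (simp only: ar) simp
  have t2: "real_of_int (TO (J+i+2) i) = s * c2^2 * b2"
    unfolding TO_def s_def c2_def b2_def by (simp only: ar) simp
  have t3: "real_of_int (TO (J+i+2) (i+1)) = -4 * s * c1^2 * b3"
    unfolding TO_def s_def c1_def b3_def by (simp only: ar) simp
  have rA: "(real J+1) * c1 = 2*(2*real J+1) * a"
    using arg_cong[OF L4[of J], of real] unfolding c1_def a_def by (simp add: algebra_simps)
  have rB: "(real J+2) * c2 = 2*(2*real J+3) * c1"
    using arg_cong[OF L4[of "J+1"], of real] unfolding c2_def c1_def by (simp only: ar) (simp add: algebra_simps)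
  have d1: "real (J+1-i) = real J + 1 - real i" "real (J+1+1-i) = real J + 2 - real i" using ji by (simp_all add: of_nat_diff)
  have rC: "(real J+1-real i) * b1 = (real J+1) * z"
    using arg_cong[OF L1[of J i], of real] unfolding b1_def z_def of_nat_mult d1 by (simp only: of_nat_add of_nat_1)
  have rD: "(real J+2-real i) * b2 = (real J+2) * b1"
    using arg_cong[OF L1[of "J+1" i], of real] unfolding b1_def b2_def of_nat_mult d1 
    by (simp only: ar of_nat_add of_nat_1 one_add_one[symmetric] add.assoc)
  have rE: "(real i+1) * b3 = (real J+1) * z"
    using arg_cong[OF L2[of i J], of real] unfolding b3_def z_def by (simp add: algebra_simps)
  have nz: "real J + 1 \<noteq> 0" "real J + 2 \<noteq> 0" "real J + 1 - real i \<noteq> 0" "real J + 2 - real i \<noteq> 0"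
    "real i + 1 \<noteq> 0" "2 * real J + 1 \<noteq> 0" "2 * real J + 3 \<noteq> 0" using ji by linarith+
  define \<alpha> where "\<alpha> = a / ((real J+1)*(real J+2))"
  define w where "w = z / ((real J+1-real i)*(real J+2-real i)*(real i+1))"
  have ae: "a = (real J+1)*(real J+2)*\<alpha>" unfolding \<alpha>_def using nz by simp
  have ze: "z = (real J+1-real i)*(real J+2-real i)*(real i+1)*w" unfolding w_def using nz by simp
  have "(real J+1) * c1 = (real J+1) * (2*(2*real J+1)*(real J+2)*\<alpha>)"
    using rA unfolding ae by (simp only: ac_simps)
  then have c1e: "c1 = 2*(2*real J+1)*(real J+2)*\<alpha>" by (metis nz(1) mult_left_cancel)
  have "(real J+2) * c2 = (real J+2) * (4*(2*real J+3)*(2*real J+1)*\<alpha>)"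
    using rB unfolding c1e by (simp add: algebra_simps)
  then have c2e: "c2 = 4*(2*real J+3)*(2*real J+1)*\<alpha>" by (metis nz(2) mult_left_cancel)
  have "(real J+1-real i) * b1 = (real J+1-real i) * ((real J+1)*(real J+2-real i)*(real i+1)*w)"
    using rC unfolding ze by (simp only: ac_simps)
  then have b1e: "b1 = (real J+1)*(real J+2-real i)*(real i+1)*w" by (metis nz(3) mult_left_cancel)
  have "(real J+2-real i) * b2 = (real J+2-real i) * ((real J+2)*(real J+1)*(real i+1)*w)"
    using rD unfolding b1e by (simp only: ac_simps)
  then have b2e: "b2 = (real J+2)*(real J+1)*(real i+1)*w" by (metis nz(4) mult_left_cancel)
  have "(real i+1) * b3 = (real i+1) * ((real J+1)*(real J+1-real i)*(real J+2-real i)*w)"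
    using rE unfolding ze by (simp only: ac_simps)
  then have b3e: "b3 = (real J+1)*(real J+1-real i)*(real J+2-real i)*w" by (metis nz(5) mult_left_cancel)
  have g1: "GO (J+i+2) (i+1) = -4 * s * (2*(real J+2)*\<alpha>)^2 * b3 * P4 (real (J+i+2)) (real (i+1))"
  proof -
    have "GO (J+i+2) (i+1) = -4 * s * c1^2 * b3 * P4 (real (J+i+2)) (real (i+1)) / (2*real J+1)^2"
      unfolding GO_def t3 by (simp only: ar) (simp add: algebra_simps)
    also have "c1^2 = (2*real J+1)^2 * (2*(real J+2)*\<alpha>)^2"
      unfolding c1e power2_eq_square by (simp only: ac_simps)
    finally have "GO (J+i+2) (i+1) = (2*real J+1)^2 * (-4 * s * (2*(real J+2)*\<alpha>)^2 * b3 * P4 (real (J+i+2)) (real (i+1))) / (2*real J+1)^2"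
      by (simp only: ac_simps)
    then show ?thesis using nz(6) by simp
  qed
  have g0: "GO (J+i+2) i = s * (4*(2*real J+1)*\<alpha>)^2 * b2 * P4 (real (J+i+2)) (real i)"
  proof -
    have "GO (J+i+2) i = s * c2^2 * b2 * P4 (real (J+i+2)) (real i) / (2*real J+3)^2"
      unfolding GO_def t2 by (simp only: ar) (simp add: algebra_simps)
    also have "c2^2 = (2*real J+3)^2 * (4*(2*real J+1)*\<alpha>)^2"
      unfolding c2e power2_eq_square by (simp only: ac_simps)
    finally have "GO (J+i+2) i = (2*real J+3)^2 * (s * (4*(2*real J+1)*\<alpha>)^2 * b2 * P4 (real (J+i+2)) (real i)) / (2*real J+3)^2"
      by (simp only: ac_simps)
    then show ?thesis using nz(7) by simp
  qed
  show ?thesis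
    unfolding g1 g0 of_int_add of_int_diff of_int_mult t0 t1 t2
    unfolding c1e c2e b1e b2e b3e ae ze P4_def
    by (simp add: algebra_simps power2_eq_square power3_eq_cube)
qed




declare binomial_Suc_Suc[simp del]

lemma L3: "(k + 1) * (n choose (k+1)) = (n - k) * (n choose k)"
  using binomial_absorption[of k n] binomial_absorb_comp[of n k] by simp

definition TB :: "nat \<Rightarrow> nat \<Rightarrow> int" where
  "TB n m = int (n choose (2*m)) * 4 ^ (n - 2*m) * int ((2*m) choose m) ^ 2"

definition GB :: "nat \<Rightarrow> nat \<Rightarrow> int" where
  "GB N m = - 4 * int m ^ 2 * int ((N+1) choose (2*m - 1)) * 4 ^ (N + 2 - 2*m) * int ((2*m) choose m) ^ 2"

lemma termB:
  "int ((N+2)^2) * TB (N+2) m - 4 * (3 * int (N+2)^2 - 3 * int (N+2) + 1) * TB (N+1) m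
     + 32 * int (N+1)^2 * TB N m = GB N (m+1) - GB N m"
proof (cases m)
  case 0
  then show ?thesis unfolding TB_def GB_def
    by (simp add: power_add algebra_simps power2_eq_square)
next
  case (Suc k)
  then have m: "m = k + 1" by simp
  consider "N < 2*k" | "N = 2*k" | "N = 2*k+1" | d where "N = 2*k+2+d"
  proof -
    have "N < 2*k \<or> N = 2*k \<or> N = 2*k+1 \<or> (\<exists>d. N = 2*k+2+d)" by presburger
    then show ?thesis using that by blast
  qed
  then show ?thesis
  proof cases
    case 1
    then show ?thesis unfolding TB_def GB_def m by (simp add: binomial_eq_0)
  next
    case 2
    then show ?thesis unfolding TB_def GB_def m by (simp add: binomial_eq_0 algebra_simps power2_eq_square)
  next
    case 3
    have e1: "(2*k+3) choose (2*k+2) = 2*k+3"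
    proof -
      have h: "2*k+3 = Suc (2*k+2)" by simp
      show ?thesis unfolding h by (rule binomial_Suc_n)
    qed
    have e2: "(2*k+2) choose (2*k+1) = 2*k+2"
    proof -
      have h: "2*k+2 = Suc (2*k+1)" by simp
      show ?thesis unfolding h by (rule binomial_Suc_n)
    qed
    have z: "(2*k+1) choose (2*k+2) = 0" "(2*k+2) choose (2*k+3) = 0" "(2*k+2) choose (2*k+2) = 1"
      by (simp_all add: binomial_eq_0)
    have ar: "2*k+1+2 = 2*k+3" "2*(k+1) = 2*k+2" "2*k+1+1 = 2*k+2" "2*(k+1+1) = 2*k+4" "2*k+4-1 = 2*k+3"
      "2*k+2-1 = 2*k+1" "2*k+3-(2*k+2) = 1" "2*k+2-(2*k+2) = 0" "2*k+1+2-(2*k+4) = 0" "2*k+1+2-(2*k+2) = 1"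
      "k+1+1 = k+2" "2*(k+2) = 2*k+4" by simp_all
    show ?thesis unfolding TB_def GB_def m 3
      by (simp only: ar e1 e2 z) (simp add: algebra_simps power2_eq_square)
  next
    case 4
    define Y where "Y = real (N choose (2*k+2))"
    define X1 where "X1 = real ((N+2) choose (2*k+2))"
    define X2 where "X2 = real ((N+1) choose (2*k+2))"
    define X3 where "X3 = real ((N+1) choose (2*k+3))"
    define X4 where "X4 = real ((N+1) choose (2*k+1))"
    define s where "s = real ((2*k+2) choose (k+1))"
    define q where "q = real ((2*k+4) choose (k+2))"
    have ea: "N + 1 - (2*k+2) = d+1" "N+1+1 = N+2" "2*k+2+1 = 2*k+3" "2*k+1+1 = 2*k+2" "N+1-(2*k+1) = d+2"
      "k+1+1 = k+2" "2*(k+1)+2 = 2*k+4" "2*(k+1)+1 = 2*k+3" "2*(k+1) = 2*k+2" "N+2-(2*k+2) = d+2" "2*k+2+2 = 2*k+4" using 4 by auto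
    have r2n: "(d+1) * ((N+1) choose (2*k+2)) = (N+1) * (N choose (2*k+2))"
      using L1[of N "2*k+2"] unfolding ea .
    have r1n: "(d+2) * ((N+2) choose (2*k+2)) = (N+2) * ((N+1) choose (2*k+2))"
      using L1[of "N+1" "2*k+2"] unfolding ea .
    have r3n: "(2*k+3) * ((N+1) choose (2*k+3)) = (N+1) * (N choose (2*k+2))"
      using L2[of "2*k+2" N] unfolding ea .
    have r4n: "(2*k+2) * ((N+1) choose (2*k+2)) = (d+2) * ((N+1) choose (2*k+1))"
      using L3[of "2*k+1" "N+1"] unfolding ea .
    have r5n: "(k+2) * ((2*k+4) choose (k+2)) = 2 * (2*k+3) * ((2*k+2) choose (k+1))"
      using L4[of "k+1"] unfolding ea .
    have r2: "(real d + 1) * X2 = (real N + 1) * Y"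
      using arg_cong[OF r2n, of real] unfolding X2_def Y_def by (simp add: algebra_simps)
    have r1: "(real d + 2) * X1 = (real N + 2) * X2"
      using arg_cong[OF r1n, of real] unfolding X2_def X1_def by (simp add: algebra_simps)
    have r3: "(2 * real k + 3) * X3 = (real N + 1) * Y"
      using arg_cong[OF r3n, of real] unfolding X3_def Y_def by (simp add: algebra_simps)
    have r4: "(2 * real k + 2) * X2 = (real d + 2) * X4"
      using arg_cong[OF r4n, of real] unfolding X2_def X4_def by (simp add: algebra_simps)
    have r5: "(real k + 2) * q = 2 * (2 * real k + 3) * s"
      using arg_cong[OF r5n, of real] unfolding q_def s_def by (simp add: algebra_simps)
    have d1: "real d + 1 \<noteq> 0" "real d + 2 \<noteq> 0" "2 * real k + 3 \<noteq> 0" "real k + 2 \<noteq> 0" by linarith+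
    define W where "W = Y / ((real d+1)*(real d+2)*(2*real k+3))"
    define t where "t = s / (real k+2)"
    have Ye: "Y = (real d+1)*(real d+2)*(2*real k+3)*W" unfolding W_def using d1 by simp
    have se: "s = (real k+2)*t" unfolding t_def using d1 by simp
    have "(real d+1) * X2 = (real d+1) * ((real N+1)*(real d+2)*(2*real k+3)*W)"
      using r2 unfolding Ye by (simp only: ac_simps)
    then have X2e: "X2 = (real N+1)*(real d+2)*(2*real k+3)*W" by (metis d1(1) mult_left_cancel)
    have "(real d+2) * X1 = (real d+2) * ((real N+2)*(real N+1)*(2*real k+3)*W)"
      using r1 unfolding X2e by (simp only: ac_simps)
    then have X1e: "X1 = (real N+2)*(real N+1)*(2*real k+3)*W" by (metis d1(2) mult_left_cancel)
    have "(2*real k+3) * X3 = (2*real k+3) * ((real N+1)*(real d+1)*(real d+2)*W)"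
      using r3 unfolding Ye by (simp only: ac_simps)
    then have X3e: "X3 = (real N+1)*(real d+1)*(real d+2)*W" by (metis d1(3) mult_left_cancel)
    have "(real d+2) * X4 = (real d+2) * ((2*real k+2)*(real N+1)*(2*real k+3)*W)"
      using r4 unfolding X2e by (simp only: ac_simps)
    then have X4e: "X4 = (2*real k+2)*(real N+1)*(2*real k+3)*W" by (metis d1(2) mult_left_cancel)
    have "(real k+2) * q = (real k+2) * (2*(2*real k+3)*t)"
      using r5 unfolding se by (simp only: ac_simps)
    then have qe: "q = 2*(2*real k+3)*t" by (metis d1(4) mult_left_cancel)
    have Ne: "real N = 2*real k+2+real d" using 4 by simp
    have ex: "2*(k+1) = 2*k+2" "2*(k+2) = 2*k+4" "N+2-(2*k+2) = d+2" "N+1-(2*k+2) = d+1" "N-(2*k+2) = d"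
      "N+2-(2*k+4) = d" "2*k+2-1 = 2*k+1" "2*k+4-1 = 2*k+3" "k+1+1 = k+2" using 4 by auto
    have key: "(real N + 2)^2 * X1 * 16 * s^2 - 4 * (3 * (real N + 2)^2 - 3 * (real N + 2) + 1) * X2 * 4 * s^2
       + 32 * (real N + 1)^2 * Y * s^2 = - 4 * (real k + 2)^2 * X3 * q^2 + 4 * (real k + 1)^2 * X4 * 16 * s^2"
      unfolding X1e X2e X3e X4e qe Ye se Ne by (simp add: algebra_simps power2_eq_square)
    have "real_of_int (int ((N+2)^2) * TB (N+2) m - 4 * (3 * int (N+2)^2 - 3 * int (N+2) + 1) * TB (N+1) m
     + 32 * int (N+1)^2 * TB N m) = 4 ^ d * ((real N + 2)^2 * X1 * 16 * s^2 - 4 * (3 * (real N + 2)^2 - 3 * (real N + 2) + 1) * X2 * 4 * s^2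
       + 32 * (real N + 1)^2 * Y * s^2)"
      unfolding TB_def m X1_def X2_def Y_def s_def by (simp only: ex) (simp add: algebra_simps power_add)
    also have "\<dots> = 4 ^ d * (- 4 * (real k + 2)^2 * X3 * q^2 + 4 * (real k + 1)^2 * X4 * 16 * s^2)"
      by (simp only: key)
    also have "\<dots> = real_of_int (GB N (m+1) - GB N m)"
      unfolding GB_def m X3_def X4_def q_def s_def by (simp only: ex) (simp add: algebra_simps power_add)
    finally show ?thesis by (simp only: of_int_eq_iff)
  qed
qed


lemma TO_zero: "n < 2 * i \<Longrightarrow> TO n i = 0"
proof -
  assume h: "n < 2 * i"
  have "n - i < i" using h by linarith
  then show "TO n i = 0" unfolding TO_def by (simp add: binomial_eq_0)
qed

lemma GO_zero: "n < 2 * i \<Longrightarrow> GO n i = 0"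
  unfolding GO_def by (simp add: TO_zero)

lemma termO:
  "real_of_int (int (N+2)^2 * TO (N+2) i - 4 * (3 * int (N+2)^2 - 3 * int (N+2) + 1) * TO (N+1) i
     + 32 * int (N+1)^2 * TO N i) = GO (N+2) (i+1) - GO (N+2) i"
proof -
  consider "2*i \<le> N" | "2*i = N+1" | "2*i = N+2" | "2*i > N+2" by linarith
  then show ?thesis
  proof cases
    case 1
    define J where "J = N - i"
    have N: "N = J + i" and ji: "i \<le> J" using 1 unfolding J_def by auto
    show ?thesis unfolding N using termO_main[OF ji] by simp
  next
    case 2
    define k where "k = i - 1"
    have i: "i = k+1" and N: "N = 2*k+1" using 2 unfolding k_def by linarith+
    define c where "c = real ((2*k+2) choose (k+1))"
    define c4 where "c4 = real ((2*k+4) choose (k+2))"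
    define s where "s = ((-4) ^ (k+1) :: real)"
    have ar: "2*k+1+2 - (k+1) = k+2" "2*k+1+1 - (k+1) = k+1" "2*(k+2) = 2*k+4" "2*(k+1) = 2*k+2"
      "2*k+2+2 = 2*k+4" "k+1+1 = k+2" "2*k+2+1 = 2*k+3" by simp_all
    have z: "TO (2*k+1) (k+1) = 0" "TO (2*k+1+2) (k+1+1) = 0" by (simp_all add: TO_zero)
    have kk: "(k+2) choose (k+1) = k+2" "(k+1) choose (k+1) = 1"
    proof -
      have h: "k+2 = Suc (k+1)" by simp
      show "(k+2) choose (k+1) = k+2" unfolding h by (rule binomial_Suc_n)
    qed simp
    have t1: "real_of_int (TO (2*k+1+1) (k+1)) = s * c^2"
      unfolding TO_def s_def c_def by (simp only: ar kk) simp
    have t2: "real_of_int (TO (2*k+1+2) (k+1)) = s * c4^2 * (real k + 2)"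
      unfolding TO_def s_def c4_def by (simp only: ar kk) simp
    have rn: "(k+2) * ((2*k+4) choose (k+2)) = 2 * (2*k+3) * ((2*k+2) choose (k+1))"
      using L4[of "k+1"] unfolding ar .
    have r: "(real k+2) * c4 = 2*(2*real k+3) * c"
      using arg_cong[OF rn, of real] unfolding c4_def c_def by (simp add: algebra_simps)
    define \<gamma> where "\<gamma> = c / (real k + 2)"
    have ce: "c = (real k + 2) * \<gamma>" unfolding \<gamma>_def by simp
    have "(real k+2) * c4 = (real k+2) * (2*(2*real k+3)*\<gamma>)" using r unfolding ce by (simp only: ac_simps)
    then have c4e: "c4 = 2*(2*real k+3)*\<gamma>" by (metis mult_left_cancel add_nonneg_pos of_nat_0_le_iff zero_less_numeral less_irrefl)
    have g0: "GO (2*k+1+2) (k+1) = s * (2*\<gamma>)^2 * (real k + 2) * P4 (real (2*k+1+2)) (real (k+1))"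
    proof -
      have "GO (2*k+1+2) (k+1) = s * c4^2 * (real k + 2) * P4 (real (2*k+1+2)) (real (k+1)) / (2 * real (k+2) - 1)^2"
        unfolding GO_def t2 by (simp only: ar)
      also have "c4^2 = (2 * real (k+2) - 1)^2 * (2*\<gamma>)^2" unfolding c4e by (simp add: power2_eq_square algebra_simps)
      finally have "GO (2*k+1+2) (k+1) = (2 * real (k+2) - 1)^2 * (s * (2*\<gamma>)^2 * (real k + 2) * P4 (real (2*k+1+2)) (real (k+1))) / (2 * real (k+2) - 1)^2"
        by (simp only: ac_simps)
      then show ?thesis using odd_ne[of "k+2"] by simp
    qed
    have g1: "GO (2*k+1+2) (k+1+1) = 0" unfolding GO_def z by simp
    show ?thesis unfolding i N
      unfolding of_int_add of_int_diff of_int_mult t1 t2 z g0 g1 c4e ce P4_def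
      by (simp add: algebra_simps power2_eq_square power3_eq_cube)
  next
    case 3
    define k where "k = i - 1"
    have i: "i = k+1" and N: "N = 2*k" using 3 unfolding k_def by linarith+
    define c where "c = real ((2*k+2) choose (k+1))"
    define s where "s = ((-4) ^ (k+1) :: real)"
    have ar: "2*k+2 - (k+1) = k+1" "2*(k+1) = 2*k+2" by simp_all
    have z: "TO (2*k) (k+1) = 0" "TO (2*k+1) (k+1) = 0" "TO (2*k+2) (k+1+1) = 0" by (simp_all add: TO_zero)
    have t2: "real_of_int (TO (2*k+2) (k+1)) = s * c^2"
      unfolding TO_def s_def c_def by (simp only: ar) simp
    have g0: "GO (2*k+2) (k+1) = s * c^2 * P4 (real (2*k+2)) (real (k+1)) / (2 * real k + 1)^2"
      unfolding GO_def t2 by (simp only: ar) simp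
    have g1: "GO (2*k+2) (k+1+1) = 0" unfolding GO_def z by simp
    have P: "P4 (real (2*k+2)) (real (k+1)) = - 4 * (real k+1)^2 * (2 * real k + 1)^2"
      unfolding P4_def by (simp add: algebra_simps power2_eq_square power3_eq_cube)
    have nz: "(2 * real k + 1)^2 \<noteq> 0" by (simp add: add_nonneg_pos)
    have "N + 2 = 2*k+2" "N + 1 = 2*k+1" using N by simp_all
    then show ?thesis unfolding i N
      unfolding of_int_add of_int_diff of_int_mult t2 z g0 g1 P using nz
      by (simp add: field_simps) (simp add: algebra_simps power2_eq_square)
  next
    case 4
    then show ?thesis by (simp add: TO_zero GO_zero)
  qed
qed




declare binomial_Suc_Suc[simp del]

lemma TB_zero: "n < 2 * m \<Longrightarrow> TB n m = 0"
  unfolding TB_def by (simp add: binomial_eq_0)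

lemma bB_ext: "n < K \<Longrightarrow> bB n = (\<Sum>m<K. TB n m)"
  unfolding bB_def TB_def[symmetric]
proof (rule sum.mono_neutral_left)
  show "finite {..<K}" by simp
  assume "n < K"
  then show "{..n div 2} \<subseteq> {..<K}" by auto
  show "\<forall>i\<in>{..<K} - {..n div 2}. TB n i = 0" by (auto intro: TB_zero)
qed

definition oO :: "nat \<Rightarrow> int" where
  "oO n = (\<Sum>i\<le>n div 2. TO n i)"

lemma clf_oO: "clf n = 2 ^ n * oO n"
  unfolding clf_def oO_def TO_def ..

lemma oO_ext: "n < K \<Longrightarrow> oO n = (\<Sum>i<K. TO n i)"
  unfolding oO_def
proof (rule sum.mono_neutral_left)
  show "finite {..<K}" by simp
  assume "n < K"
  then show "{..n div 2} \<subseteq> {..<K}" by auto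
  show "\<forall>i\<in>{..<K} - {..n div 2}. TO n i = 0" by (auto intro: TO_zero)
qed

lemma recB: "int (N+2)^2 * bB (N+2) - 4 * (3 * int (N+2)^2 - 3 * int (N+2) + 1) * bB (N+1)
     + 32 * int (N+1)^2 * bB N = 0"
proof -
  have "int (N+2)^2 * bB (N+2) - 4 * (3 * int (N+2)^2 - 3 * int (N+2) + 1) * bB (N+1)
     + 32 * int (N+1)^2 * bB N
     = (\<Sum>m<N+3. int ((N+2)^2) * TB (N+2) m - 4 * (3 * int (N+2)^2 - 3 * int (N+2) + 1) * TB (N+1) m
     + 32 * int (N+1)^2 * TB N m)"
    using bB_ext[of "N+2" "N+3"] bB_ext[of "N+1" "N+3"] bB_ext[of N "N+3"]
    by (simp add: sum.distrib sum_subtractf sum_distrib_left)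
  also have "\<dots> = (\<Sum>m<N+3. GB N (Suc m) - GB N m)"
    using termB by simp
  also have "\<dots> = GB N (N+3) - GB N 0" by (rule sum_lessThan_telescope)
  also have "\<dots> = 0" unfolding GB_def by (simp add: binomial_eq_0)
  finally show ?thesis .
qed

lemma recO: "int (N+2)^2 * oO (N+2) - 4 * (3 * int (N+2)^2 - 3 * int (N+2) + 1) * oO (N+1)
     + 32 * int (N+1)^2 * oO N = 0"
proof -
  have "real_of_int (int (N+2)^2 * oO (N+2) - 4 * (3 * int (N+2)^2 - 3 * int (N+2) + 1) * oO (N+1)
     + 32 * int (N+1)^2 * oO N)
     = (\<Sum>i<N+3. real_of_int (int (N+2)^2 * TO (N+2) i - 4 * (3 * int (N+2)^2 - 3 * int (N+2) + 1) * TO (N+1) i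
     + 32 * int (N+1)^2 * TO N i))"
    using oO_ext[of "N+2" "N+3"] oO_ext[of "N+1" "N+3"] oO_ext[of N "N+3"]
    by (simp add: sum.distrib sum_subtractf sum_distrib_left)
  also have "\<dots> = (\<Sum>i<N+3. GO (N+2) (Suc i) - GO (N+2) i)"
    using termO by simp
  also have "\<dots> = GO (N+2) (N+3) - GO (N+2) 0" by (rule sum_lessThan_telescope)
  also have "\<dots> = 0" unfolding GO_def P4_def by (simp add: TO_zero)
  finally show ?thesis by (simp only: of_int_eq_0_iff)
qed

lemma rec_unique:
  fixes f g :: "nat \<Rightarrow> int"
  assumes "f 0 = g 0" "f 1 = g 1"
    and rf: "\<And>N. int (N+2)^2 * f (N+2) - 4 * (3 * int (N+2)^2 - 3 * int (N+2) + 1) * f (N+1)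
     + 32 * int (N+1)^2 * f N = 0"
    and rg: "\<And>N. int (N+2)^2 * g (N+2) - 4 * (3 * int (N+2)^2 - 3 * int (N+2) + 1) * g (N+1)
     + 32 * int (N+1)^2 * g N = 0"
  shows "f n = g n"
proof -
  have "f n = g n \<and> f (n+1) = g (n+1)"
  proof (induction n)
    case 0 then show ?case using assms(1,2) by simp
  next
    case (Suc n)
    have a: "int (n+2)^2 * f (n+2) = 4 * (3 * int (n+2)^2 - 3 * int (n+2) + 1) * f (n+1) - 32 * int (n+1)^2 * f n"
      using rf[of n] by linarith
    have b: "int (n+2)^2 * g (n+2) = 4 * (3 * int (n+2)^2 - 3 * int (n+2) + 1) * g (n+1) - 32 * int (n+1)^2 * g n"
      using rg[of n] by linarith
    have "int (n+2)^2 * f (n+2) = int (n+2)^2 * g (n+2)"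
      unfolding a b using Suc.IH by simp
    moreover have "int (n+2)^2 \<noteq> 0" by simp
    ultimately have "f (n+2) = g (n+2)" by (metis mult_left_cancel)
    then show ?case using Suc by simp
  qed
  then show ?thesis by simp
qed

lemma oO_bB: "oO n = bB n"
proof (rule rec_unique[of oO bB])
  show "oO 0 = bB 0" unfolding oO_def bB_def TO_def by simp
  show "oO 1 = bB 1" unfolding oO_def bB_def TO_def by simp
qed (rule recO, rule recB)

theorem theorem3:
  fixes p m r :: nat
  assumes "prime p" and "m > 0" and "r > 0"
  shows "[clf (m * p ^ r) = clf (m * p ^ (r - 1))] (mod (int p ^ r))"
  using bB_gauss[OF assms(1), of r m] assms(3) unfolding clf_oO oO_bB by simp


end
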